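(* Let $n>30$ with $n\equiv 0 \pmod 6$, and let the sets $\mathcal{H}_i$ of subgroups and $\Pi_i$ of permutations of $S_n$ ($-1\le i\le n/3-1$) be as defined in the context. Suppose $-1\le i<j\le n/3-1$, $H_i\in\mathcal{H}_i$ and $H_j\in\mathcal{H}_j$. Then $\Pi_i\cap H_j=\Pi_j\cap H_i=\emptyset$.
   Context: $S_n$ is the symmetric group on $\{1,\dots,n\}$, $n\equiv 0\pmod 6$. Subgroup classes: $\mathcal{H}_{-1}$ is the set of stabilizers in $S_n$ of partitions of $\{1,\dots,n\}$ into two blocks of size $n/2$ (a stabilizer may swap the two blocks); $\mathcal{H}_0=\{A_n\}$; for $1\le i\le n/3-1$, $\mathcal{H}_i$ is the set of setwise stabilizers in $S_n$ of $i$-element subsets of $\{1,\dots,n\}$. Permutation classes (cycle lengths listed, all of which together account for all $n$ points, so no further fixed points): $\Pi_{-1}$ is the set of $n$-cycles; $\Pi_0$ is the set of elements that are a product of two disjoint cycles of lengths $n/2-1$ and $n/2+1$ if $n/2$ is even, respectively of lengths $n/2-2$ and $n/2+2$ if $n/2$ is odd; $\Pi_1$ is the set of elements with exactly one fixed point and two further cycles of lengths $n/2-2$ and $n/2+1$; for odd $i$ with $3\le i\le n/3-1$, $\Pi_i$ is the set of products of three disjoint cycles of lengths $i$, $(n-i-1)/2$, $(n-i+1)/2$; for even $i$ with $2\le i\le n/3-1$ and $(n-i)/2$ odd, $\Pi_i$ is the set of products of three disjoint cycles of lengths $i,(n-i)/2,(n-i)/2$; for even $i$ with $4\le i\le n/3-1$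 and $(n-i)/2$ even, $\Pi_i$ is the set of products of three disjoint cycles of lengths $i,(n-i)/2-1,(n-i)/2+1$; if $(n-2)/2$ is even, $\Pi_2$ is the set of products of three disjoint cycles of lengths $2, n/2-4, n/2+2$. *)

theory Defs
  imports "HOL-Combinatorics.Permutations" "HOL-Library.Multiset"
begin

definition Sym :: "nat \<Rightarrow> (nat \<Rightarrow> nat) set" where
  "Sym n = {p. p permutes {1..n}}"

definition Alt :: "nat \<Rightarrow> (nat \<Rightarrow> nat) set" where
  "Alt n = {p. p permutes {1..n} \<and> evenperm p}"

definition orb :: "(nat \<Rightarrow> nat) \<Rightarrow> nat \<Rightarrow> nat set" where
  "orb p x = {(p ^^ k) x | k. True}"

definition cycle_type :: "nat \<Rightarrow> (nat \<Rightarrow> nat) \<Rightarrow> nat multiset" where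
  "cycle_type n p = image_mset card (mset_set {orb p x | x. x \<in> {1..n}})"

definition set_stab :: "nat \<Rightarrow> nat set \<Rightarrow> (nat \<Rightarrow> nat) set" where
  "set_stab n A = {p \<in> Sym n. p ` A = A}"

definition part_stab :: "nat \<Rightarrow> nat set \<Rightarrow> nat set \<Rightarrow> (nat \<Rightarrow> nat) set" where
  "part_stab n A B = {p \<in> Sym n. {p ` A, p ` B} = {A, B}}"

definition Hcal :: "nat \<Rightarrow> int \<Rightarrow> (nat \<Rightarrow> nat) set set" where
  "Hcal n i =
    (if i = -1 then
       {part_stab n A B | A B. A \<union> B = {1..n} \<and> A \<inter> B = {} \<and>
                             card A = n div 2 \<and> card B = n div 2}
     else if i = 0 then {Alt n}
     else if 1 \<le> i \<and> i \<le> int (n div 3) - 1 then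
       {set_stab n A | A. A \<subseteq> {1..n} \<and> card A = nat i}
     else {})"

text \<open>The prescribed cycle type for \<Pi>_i (undefined, i.e. no permutation, outside the range).\<close>
definition Pi_type :: "nat \<Rightarrow> int \<Rightarrow> nat multiset option" where
  "Pi_type n i =
    (let h = n div 2; k = nat i in
     if i = -1 then Some {#n#}
     else if i = 0 then
       (if even h then Some {#h - 1, h + 1#} else Some {#h - 2, h + 2#})
     else if i = 1 then Some {#1, h - 2, h + 1#}
     else if 2 \<le> i \<and> i \<le> int (n div 3) - 1 then
       (if odd k then
          (if 3 \<le> k then Some {#k, (n - k - 1) div 2, (n - k + 1) div 2#} else None)
        else if odd ((n - k) div 2) then Some {#k, (n - k) div 2, (n - k) div 2#}
        else if 4 \<le> k then Some {#k, (n - k) div 2 - 1, (n - k) div 2 + 1#}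
        else Some {#2, h - 4, h + 2#})
     else None)"

definition Pical :: "nat \<Rightarrow> int \<Rightarrow> (nat \<Rightarrow> nat) set" where
  "Pical n i = {p \<in> Sym n. Pi_type n i = Some (cycle_type n p)}"

end

theory Submission
  imports Defs "HOL-Combinatorics.Cycles" "HOL-Combinatorics.Orbits"
begin


lemma evenperm_cycle: "distinct cs \<Longrightarrow> evenperm (cycle_of_list cs) \<longleftrightarrow> (cs = [] \<or> odd (length cs))"
proof (induction cs rule: cycle_of_list.induct)
  case (1 i j cs)
  then show ?case
  proof -
    have "evenperm (cycle_of_list (i # j # cs)) = (evenperm (transpose i j) = evenperm (cycle_of_list (j # cs)))"
      unfolding cycle_of_list.simps(1) by (rule evenperm_comp[OF permutation_swap_id permutation_of_cycle])
    then show ?thesis using 1 by (simp add: evenperm_swap del: cycle_of_list.simps)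
  qed
qed auto

lemma sub_add_mset:
  assumes "M \<subseteq># add_mset a N"
  shows "M \<subseteq># N \<or> (\<exists>M'. M = add_mset a M' \<and> M' \<subseteq># N)"
proof (cases "a \<in># M")
  case True
  then have "M = add_mset a (M - {#a#})" by simp
  with assms have "M - {#a#} \<subseteq># N"
    by (metis mset_subset_eq_add_mset_cancel)
  then show ?thesis using \<open>M = _\<close> by blast
next
  case False
  have "count M x \<le> count N x" for x
    using assms False unfolding subseteq_mset_def
    by (metis count_add_mset count_eq_zero_iff le_zero_eq nat_le_linear not_less_eq_eq)
  then show ?thesis by (simp add: subseteq_mset_def)
qed

lemma sub1: "M \<subseteq># {#x#} \<Longrightarrow> sum_mset M \<in> {0, x}"
  by (auto dest!: sub_add_mset)

lemma sub3: "M \<subseteq># {#x, y, z#} \<Longrightarrow> sum_mset M \<in> {0,x,y,z,x+y,x+z,y+z,x+y+z}"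
  by (auto dest!: sub_add_mset simp: add_ac)

lemma orb_eq: "permutation p \<Longrightarrow> orb p x = orbit p x"
  by (simp add: orb_def orbit_altdef_permutation)

lemma orbit_support: "permutation p \<Longrightarrow> orbit p x = set (support p x)"
  unfolding support_set orbit_altdef_permutation by blast

lemma orbit_same: "permutation p \<Longrightarrow> y \<in> orbit p x \<Longrightarrow> orbit p y = orbit p x"
  using cyclic_on_orbit' orbit_cyclic_eq3 by metis

lemma perm_decomp:
  assumes "p permutes S" "finite S"
  shows "(cycle_of_list (support p s) \<circ> (\<lambda>y. if y \<in> (S - set (support p s)) then p y else y)) = p"
    (is "_ \<circ> ?q = _")
proof
  have is_permutation: "permutation p"
      using assms unfolding permutation_permutes by blast
  fix a
  consider "a \<in> S - set (support p s)" | "a \<in> set (support p s)" | "a \<notin> S" "a \<notin> set (support p s)"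
    by blast
  thus "((cycle_of_list (support p s) \<circ> ?q)) a = p a"
  proof cases
    case 1
    have "(p ^^ 1) a \<in> set (support p a)"
      unfolding support_set[OF is_permutation] by blast
    with \<open>a \<in> S - set (support p s)\<close> have "p a \<notin> set (support p s)"
      using disjoint_support'[OF is_permutation, of a s] by auto
    with \<open>a \<in> S - set (support p s)\<close> show ?thesis
      using id_outside_supp[of _ "support p s"] by simp
  next
    case 2 thus ?thesis
      using cycle_restrict[OF is_permutation] by simp
  next
    case 3 thus ?thesis
      using id_outside_supp[OF 3(2)] assms permutes_not_in by fastforce
  qed
qed

lemma parity:
  "p permutes S \<Longrightarrow> finite S \<Longrightarrow> evenperm p \<longleftrightarrow> even (card S + card {orbit p x | x. x \<in> S})"
proof (induction "card S" arbitrary: S p rule: less_induct)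
  case less
  show ?case
  proof (cases "S = {}")
    case True
    then have "p = id" using less(2) by (simp add: permutes_empty)
    then show ?thesis using True by simp
  next
    case False
    then obtain s where s: "s \<in> S" by blast
    have pp: "permutation p" using less(2,3) unfolding permutation_permutes by blast
    define C where "C = orbit p s"
    have C: "C = set (support p s)" unfolding C_def by (rule orbit_support[OF pp])
    define q where "q = (\<lambda>y. if y \<in> (S - C) then p y else y)"
    have qperm: "q permutes (S - C)" unfolding q_def C by (rule semidecomposition[OF less(2,3)])
    have pq: "cycle_of_list (support p s) \<circ> q = p" unfolding q_def C by (rule perm_decomp[OF less(2,3)])
    have sC: "s \<in> C" unfolding C_def by (rule permutation_self_in_orbit[OF pp])
    have CS: "C \<subseteq> S" unfolding C_def by (rule permutes_orbit_subset[OF less(2) s])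
    have "S - C \<subset> S" using sC s by blast
    then have lt: "card (S - C) < card S" by (rule psubset_card_mono[OF less(3)])
    have fin2: "finite (S - C)" using less(3) by simp
    have qp: "permutation q" using qperm fin2 unfolding permutation_permutes by blast
    have IH: "evenperm q \<longleftrightarrow> even (card (S - C) + card {orbit q x | x. x \<in> S - C})"
      by (rule less(1)[OF lt qperm fin2])
    have orbq: "orbit q x = orbit p x" if x: "x \<in> S - C" for x
    proof -
      have sub: "orbit p x \<subseteq> S - C"
      proof
        fix y assume y: "y \<in> orbit p x"
        have "y \<in> S" using permutes_orbit_subset[OF less(2)] x y by blast
        moreover have "y \<notin> C"
        proof
          assume "y \<in> C"
          then have "orbit p y = C" using orbit_same[OF pp] unfolding C_def by blast
          moreover have "orbit p y = orbit p x" using orbit_same[OF pp y] .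
          ultimately show False using x permutation_self_in_orbit[OF pp, of x] by blast
        qed
        ultimately show "y \<in> S - C" by blast
      qed
      have "(q ^^ k) x = (p ^^ k) x" for k
      proof (induction k)
        case (Suc k)
        have "(p ^^ k) x \<in> orbit p x" using orbit_altdef_permutation[OF pp] by blast
        then have "(p ^^ k) x \<in> S - C" using sub by blast
        then show ?case using Suc by (simp add: q_def)
      qed simp
      then show ?thesis by (simp add: orbit_altdef_permutation[OF pp] orbit_altdef_permutation[OF qp])
    qed
    have orbs: "{orbit q x | x. x \<in> S - C} = {orbit p x | x. x \<in> S} - {C}"
    proof (intro set_eqI iffI)
      fix Q assume "Q \<in> {orbit q x | x. x \<in> S - C}"
      then obtain x where x: "x \<in> S - C" "Q = orbit q x" by blast
      then have "Q = orbit p x" using orbq by simp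
      moreover have "orbit p x \<noteq> C" using x permutation_self_in_orbit[OF pp, of x] by blast
      ultimately show "Q \<in> {orbit p x | x. x \<in> S} - {C}" using x by blast
    next
      fix Q assume "Q \<in> {orbit p x | x. x \<in> S} - {C}"
      then obtain x where x: "x \<in> S" "Q = orbit p x" "Q \<noteq> C" by blast
      have "x \<notin> C"
      proof
        assume "x \<in> C" then have "orbit p x = C" using orbit_same[OF pp] unfolding C_def by blast
        then show False using x by simp
      qed
      then show "Q \<in> {orbit q x | x. x \<in> S - C}" using x orbq by blast
    qed
    have finO: "finite {orbit p x | x. x \<in> S}" using less(3) by simp
    have CO: "C \<in> {orbit p x | x. x \<in> S}" unfolding C_def using s by blast
    have cardO: "card {orbit p x | x. x \<in> S} = Suc (card {orbit q x | x. x \<in> S - C})"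
    proof -
      have "card {orbit p x | x. x \<in> S} > 0" using finO CO card_gt_0_iff by blast
      then show ?thesis unfolding orbs card_Diff_singleton[OF CO] by simp
    qed
    have c1: "card (S - C) = card S - card C" by (rule card_Diff_subset[OF finite_subset[OF CS less(3)] CS])
    have c2: "card C \<le> card S" by (rule card_mono[OF less(3) CS])
    have cardS: "card S = card (S - C) + card C" using c1 c2 by simp
    have cC: "card C = length (support p s)" unfolding C
      by (rule distinct_card[OF cycle_of_permutation[OF pp]])
    have lpos: "length (support p s) > 0" using least_power_of_permutation(2)[OF pp] by simp
    have ec: "evenperm (cycle_of_list (support p s)) \<longleftrightarrow> odd (card C)"
      using evenperm_cycle[OF cycle_of_permutation[OF pp, of s]] lpos cC by auto
    have "evenperm (cycle_of_list (support p s) \<circ> q) = (evenperm (cycle_of_list (support p s)) = evenperm q)"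
      by (rule evenperm_comp[OF permutation_of_cycle qp])
    then have "evenperm p = (evenperm (cycle_of_list (support p s)) = evenperm q)"
      by (simp only: pq)
    then have "evenperm p = (odd (card C) = even (card (S - C) + card {orbit q x | x. x \<in> S - C}))"
      using ec IH by simp
    then show ?thesis unfolding cardO cardS by simp blast
  qed
qed



lemma sub2: "M \<subseteq># {#x, y#} \<Longrightarrow> sum_mset M \<in> {0,x,y,x+y}"
  by (auto dest!: sub_add_mset simp: add_ac)

lemma sym_perm: "p \<in> Sym n \<Longrightarrow> permutation p"
  unfolding Sym_def permutation_permutes using finite_atLeastAtMost by blast

lemma orbs_eq: "p \<in> Sym n \<Longrightarrow> {orb p x | x. x \<in> {1..n}} = {orbit p x | x. x \<in> {1..n}}"
  using orb_eq[OF sym_perm] by auto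

lemma ct_parity: "p \<in> Sym n \<Longrightarrow> evenperm p \<longleftrightarrow> even (n + size (cycle_type n p))"
proof -
  assume p: "p \<in> Sym n"
  have "evenperm p \<longleftrightarrow> even (card {1..n} + card {orbit p x | x. x \<in> {1..n}})"
    by (rule parity) (use p in \<open>auto simp: Sym_def\<close>)
  then show ?thesis unfolding cycle_type_def orbs_eq[OF p] by simp
qed

lemma orbit_image: "permutation p \<Longrightarrow> p ` orbit p x = orbit p x"
proof -
  assume pp: "permutation p"
  have "p ` {(p ^^ n) x | n. True} = {(p ^^ n) x | n. 0 < n}"
  proof (intro set_eqI iffI)
    fix y assume "y \<in> p ` {(p ^^ n) x | n. True}"
    then obtain k where "y = p ((p ^^ k) x)" by blast
    then have "y = (p ^^ Suc k) x" by simp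
    then show "y \<in> {(p ^^ n) x | n. 0 < n}" by (intro CollectI exI[of _ "Suc k"]) simp
  next
    fix y assume "y \<in> {(p ^^ n) x | n. 0 < n}"
    then obtain m where m: "y = (p ^^ m) x" "0 < m" by blast
    then obtain k where "m = Suc k" using gr0_implies_Suc by blast
    with m have "y = (p ^^ Suc k) x" by simp
    then have "y = p ((p ^^ k) x)" by simp
    then show "y \<in> p ` {(p ^^ n) x | n. True}" by (intro image_eqI[of _ _ "(p ^^ k) x"]) auto
  qed
  then show ?thesis using orbit_altdef_permutation[OF pp] orbit_altdef[of p x] by simp
qed

lemma ct_stab:
  assumes p: "p \<in> Sym n" and A: "A \<subseteq> {1..n}" "p ` A = A"
  shows "\<exists>M. M \<subseteq># cycle_type n p \<and> sum_mset M = card A"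
proof -
  have pp: "permutation p" by (rule sym_perm[OF p])
  define P where "P = {orbit p x | x. x \<in> {1..n}}"
  define PA where "PA = {Q \<in> P. Q \<subseteq> A}"
  have finP: "finite P" unfolding P_def by simp
  have closed: "orbit p x \<subseteq> A" if x: "x \<in> A" for x
  proof -
    have "(p ^^ k) x \<in> A" for k
    proof (induction k)
      case (Suc k) then show ?case using A(2) by auto
    qed (use x in simp)
    then show ?thesis using orbit_altdef_permutation[OF pp] by auto
  qed
  have U: "\<Union>PA = A"
  proof
    show "\<Union>PA \<subseteq> A" unfolding PA_def by blast
    show "A \<subseteq> \<Union>PA"
    proof
      fix x assume x: "x \<in> A"
      then have "orbit p x \<in> PA" unfolding PA_def P_def using closed A(1) by blast
      then show "x \<in> \<Union>PA" using permutation_self_in_orbit[OF pp, of x] by blast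
    qed
  qed
  have disj: "pairwise disjnt PA"
  proof (rule pairwiseI)
    fix Q1 Q2 assume Q: "Q1 \<in> PA" "Q2 \<in> PA" "Q1 \<noteq> Q2"
    then obtain x1 x2 where x: "Q1 = orbit p x1" "Q2 = orbit p x2" unfolding PA_def P_def by blast
    show "disjnt Q1 Q2" unfolding disjnt_def
    proof (rule ccontr)
      assume "Q1 \<inter> Q2 \<noteq> {}"
      then obtain z where z: "z \<in> orbit p x1" "z \<in> orbit p x2" using x by blast
      have "orbit p z = Q1" using orbit_same[OF pp z(1)] x by simp
      moreover have "orbit p z = Q2" using orbit_same[OF pp z(2)] x by simp
      ultimately show False using Q(3) by simp
    qed
  qed
  have fins: "finite Q" if Q: "Q \<in> PA" for Q
  proof -
    obtain x where "Q = orbit p x" using Q unfolding PA_def P_def by blast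
    then show ?thesis using finite_orbit[OF permutation_self_in_orbit[OF pp]] by simp
  qed
  have "card A = sum card PA" using card_Union_disjoint[OF disj fins] U by simp
  also have "\<dots> = sum_mset (image_mset card (mset_set PA))" by (rule sum_unfold_sum_mset)
  finally have 1: "sum_mset (image_mset card (mset_set PA)) = card A" by simp
  have "mset_set PA \<subseteq># mset_set P"
    by (rule subset_imp_msubset_mset_set) (use finP in \<open>auto simp: PA_def\<close>)
  then have "image_mset card (mset_set PA) \<subseteq># cycle_type n p"
    unfolding cycle_type_def orbs_eq[OF p] P_def[symmetric] by (rule image_mset_subseteq_mono)
  with 1 show ?thesis by blast
qed

lemma ct_swap:
  assumes p: "p \<in> Sym n" and AB: "A \<union> B = {1..n}" "A \<inter> B = {}" "p ` A = B"
  shows "\<forall>c \<in># cycle_type n p. even c"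
proof
  fix c assume "c \<in># cycle_type n p"
  then obtain x where x: "x \<in> {1..n}" and c: "c = card (orbit p x)"
    unfolding cycle_type_def orbs_eq[OF p]
    by (auto simp: elem_mset_set)
  have pp: "permutation p" by (rule sym_perm[OF p])
  have inj: "inj p" using pp by (simp add: permutation_bijective bij_is_inj)
  define Q where "Q = orbit p x"
  have finQ: "finite Q" unfolding Q_def by (rule finite_orbit[OF permutation_self_in_orbit[OF pp]])
  have pS: "p permutes {1..n}" using p by (simp add: Sym_def)
  have QS: "Q \<subseteq> {1..n}" unfolding Q_def by (rule permutes_orbit_subset[OF pS x])
  have "p ` (Q \<inter> A) = Q \<inter> B"
    unfolding image_Int[OF inj] Q_def orbit_image[OF pp] AB(3) ..
  then have e: "card (Q \<inter> B) = card (Q \<inter> A)"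
    using card_image[of p "Q \<inter> A"] inj by (metis inj_on_subset subset_UNIV)
  have QU: "(Q \<inter> A) \<union> (Q \<inter> B) = Q" using QS AB(1) by blast
  have QD: "(Q \<inter> A) \<inter> (Q \<inter> B) = {}" using AB(2) by blast
  have "card ((Q \<inter> A) \<union> (Q \<inter> B)) = card (Q \<inter> A) + card (Q \<inter> B)"
    by (rule card_Un_disjoint) (use finQ QD in auto)
  then have "card Q = card (Q \<inter> A) + card (Q \<inter> B)" unfolding QU .
  then have "card Q = 2 * card (Q \<inter> A)" using e by simp
  then show "even c" unfolding c Q_def[symmetric] by simp
qed



definition FF :: "nat \<Rightarrow> int \<Rightarrow> nat multiset \<Rightarrow> bool" where
  "FF n b T \<longleftrightarrow> (b = -1 \<longrightarrow> ((\<exists>M. M \<subseteq># T \<and> sum_mset M = n div 2) \<or> (\<forall>c\<in>#T. even c)))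
     \<and> (b = 0 \<longrightarrow> even (n + size T))
     \<and> (1 \<le> b \<longrightarrow> (\<exists>M. M \<subseteq># T \<and> sum_mset M = nat b))"

lemma getF:
  assumes n: "n > 30" and b: "-1 \<le> b" and pS: "p \<in> Sym n" and H: "H \<in> Hcal n b" and pH: "p \<in> H"
  shows "FF n b (cycle_type n p)"
proof -
  consider "b = -1" | "b = 0" | "1 \<le> b" using b by linarith
  then show ?thesis
  proof cases
    case 1
    then obtain A B where AB: "H = part_stab n A B" "A \<union> B = {1..n}" "A \<inter> B = {}"
      "card A = n div 2" "card B = n div 2"
      using H by (auto simp: Hcal_def)
    have st: "{p ` A, p ` B} = {A, B}" using pH AB(1) by (simp add: part_stab_def)
    have "A \<noteq> {}" using AB(4) n by auto
    then have AneB: "A \<noteq> B" using AB(3) by blast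
    have inj: "inj p" using sym_perm[OF pS] by (simp add: permutation_bijective bij_is_inj)
    have Asub: "A \<subseteq> {1..n}" using AB(2) by blast
    have "(\<exists>M. M \<subseteq># cycle_type n p \<and> sum_mset M = n div 2) \<or> (\<forall>c\<in>#cycle_type n p. even c)"
    proof (cases "p ` A = A")
      case True
      then show ?thesis using ct_stab[OF pS Asub True] AB(4) by auto
    next
      case False
      then have "p ` A = B" using st by (metis doubleton_eq_iff)
      then show ?thesis using ct_swap[OF pS AB(2,3)] by blast
    qed
    then show ?thesis using 1 by (simp add: FF_def)
  next
    case 2
    then have "H = Alt n" using H by (simp add: Hcal_def)
    then have "evenperm p" using pH by (simp add: Alt_def)
    then show ?thesis using 2 ct_parity[OF pS] by (simp add: FF_def)
  next
    case 3
    then obtain A where A: "H = set_stab n A" "A \<subseteq> {1..n}" "card A = nat b"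
      using H by (auto simp: Hcal_def split: if_splits)
    have "p ` A = A" using pH A(1) by (simp add: set_stab_def)
    then show ?thesis using ct_stab[OF pS A(2)] A(3) 3 by (simp add: FF_def)
  qed
qed


lemma FF1: "FF n b {#x#} \<Longrightarrow> -1 \<le> b \<Longrightarrow>
  (b = -1 \<and> (n div 2 \<in> {0,x} \<or> even x)) \<or> (b = 0 \<and> even (n+1)) \<or> (1 \<le> b \<and> nat b \<in> {0,x})"
  unfolding FF_def by (cases "b = -1"; cases "b = 0") (auto dest!: sub1)

lemma FF2: "FF n b {#x, y#} \<Longrightarrow> -1 \<le> b \<Longrightarrow>
  (b = -1 \<and> (n div 2 \<in> {0,x,y,x+y} \<or> (even x \<and> even y))) \<or> (b = 0 \<and> even (n+2)) \<or> (1 \<le> b \<and> nat b \<in> {0,x,y,x+y})"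
  unfolding FF_def by (cases "b = -1"; cases "b = 0") (auto dest!: sub2)

lemma FF3: "FF n b {#x, y, z#} \<Longrightarrow> -1 \<le> b \<Longrightarrow>
  (b = -1 \<and> (n div 2 \<in> {0,x,y,z,x+y,x+z,y+z,x+y+z} \<or> (even x \<and> even y \<and> even z))) \<or> (b = 0 \<and> even (n+3))
   \<or> (1 \<le> b \<and> nat b \<in> {0,x,y,z,x+y,x+z,y+z,x+y+z})"
  unfolding FF_def by (cases "b = -1"; cases "b = 0") (auto dest!: sub3)


lemma key:
  assumes n: "n > 30" "n mod 6 = 0" and a: "-1 \<le> a" "a \<le> int (n div 3) - 1"
    and b: "-1 \<le> b" "b \<le> int (n div 3) - 1" and ab: "a \<noteq> b"
    and p: "p \<in> Pical n a" and H: "H \<in> Hcal n b"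
  shows "p \<notin> H"
proof
  assume pH: "p \<in> H"
  from p have pS: "p \<in> Sym n" and PT: "Pi_type n a = Some (cycle_type n p)" by (auto simp: Pical_def)
  define T where "T = cycle_type n p"
  have F: "FF n b T" unfolding T_def by (rule getF[OF n(1) b(1) pS H pH])
  obtain m where nm: "n = 6 * m" using n(2) by auto
  have m6: "m \<ge> 6" using n(1) nm by simp
  have h: "n div 2 = 3 * m" using nm by simp
  have d3: "n div 3 = 2 * m" using nm by simp
  have bm: "b \<le> 2 * int m - 1" using b(2) d3 by simp
  have am: "a \<le> 2 * int m - 1" using a(2) d3 by simp
  have PT': "Pi_type n a = Some T" using PT T_def by simp
  consider "a = -1" | "a = 0" | "a = 1" | "2 \<le> a" using a(1) by linarith
  then show False
  proof cases
    case 1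
    then have T: "T = {#n#}" using PT' by (simp add: Pi_type_def Let_def)
    show False using FF1[OF F[unfolded T] b(1)] 1 ab bm nm by auto
  next
    case 2
    show False
    proof (cases "even m")
      case True
      then have "even (n div 2)" using h by simp
      then have T: "T = {#3*m - 1, 3*m + 1#}" using PT' 2 h by (simp add: Pi_type_def Let_def)
      show False using FF2[OF F[unfolded T] b(1)] 2 ab bm nm h m6 True by auto
    next
      case False
      then have "odd (n div 2)" using h by simp
      then have T: "T = {#3*m - 2, 3*m + 2#}" using PT' 2 h by (simp add: Pi_type_def Let_def)
      show False using FF2[OF F[unfolded T] b(1)] 2 ab bm nm h m6 False by auto
    qed
  next
    case 3
    then have T: "T = {#1, 3*m - 2, 3*m + 1#}" using PT' h by (simp add: Pi_type_def Let_def)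
    show False using FF3[OF F[unfolded T] b(1)] 3 ab bm nm h m6 by auto
  next
    case 4
    define k where "k = nat a"
    have ak: "a = int k" using 4 k_def by simp
    have k2: "2 \<le> k" "k \<le> 2 * m - 1" using 4 am ak by linarith+
    have bk: "b \<noteq> int k" using ab ak by simp
    have PT2: "Pi_type n a = (if odd k then
          (if 3 \<le> k then Some {#k, (n - k - 1) div 2, (n - k + 1) div 2#} else None)
        else if odd ((n - k) div 2) then Some {#k, (n - k) div 2, (n - k) div 2#}
        else if 4 \<le> k then Some {#k, (n - k) div 2 - 1, (n - k) div 2 + 1#}
        else Some {#2, n div 2 - 4, n div 2 + 2#})"
      unfolding Pi_type_def Let_def k_def using 4 am d3 by simp
    show False
    proof (cases "odd k")
      case True
      then obtain t where t: "k = 2 * t + 1" using oddE by blast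
      have e1: "(n - k - 1) div 2 = 3 * m - t - 1" using t nm by simp
      have e2: "(n - k + 1) div 2 = 3 * m - t" using t nm k2 by simp
      have "3 \<le> k" using True k2 by (cases "k = 2") auto
      then have T: "T = {#k, 3 * m - t - 1, 3 * m - t#}" using PT' PT2 True e1 e2 by simp
      show False using FF3[OF F[unfolded T] b(1)] bk bm nm h m6 t k2 by auto
    next
      case False
      then obtain t where t: "k = 2 * t" using evenE by blast
      have e1: "(n - k) div 2 = 3 * m - t" using t nm by simp
      show False
      proof (cases "odd (3 * m - t)")
        case True
        then have c: "odd ((n - k) div 2)" using e1 by simp
        have "Pi_type n a = Some {#k, (n - k) div 2, (n - k) div 2#}"
          unfolding PT2 using False c by (simp only: if_False if_True not_False_eq_True not_True_eq_False)
        then have T: "T = {#k, 3 * m - t, 3 * m - t#}" using PT' e1 by simp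
        show False using FF3[OF F[unfolded T] b(1)] bk bm nm h m6 t k2 True by auto
      next
        case ev: False
        then have c: "\<not> odd ((n - k) div 2)" using e1 by simp
        show False
        proof (cases "4 \<le> k")
          case True
          have "Pi_type n a = Some {#k, (n - k) div 2 - 1, (n - k) div 2 + 1#}"
            unfolding PT2 using False c True by (simp only: if_False if_True not_False_eq_True not_True_eq_False)
          then have T: "T = {#k, 3 * m - t - 1, 3 * m - t + 1#}" using PT' e1 by simp
          show False using FF3[OF F[unfolded T] b(1)] bk bm nm h m6 t k2 True ev by auto
        next
          case k4: False
          have "Pi_type n a = Some {#2, n div 2 - 4, n div 2 + 2#}"
            unfolding PT2 using False c k4 by (simp only: if_False if_True not_False_eq_True not_True_eq_False)
          then have T: "T = {#2, 3 * m - 4, 3 * m + 2#}" using PT' h by simp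
          have "t = 1" using k4 t k2 by simp
          show False using FF3[OF F[unfolded T] b(1)] bk bm nm h m6 t k2 ev \<open>t = 1\<close> by auto
        qed
      qed
    qed
  qed
qed


theorem lemma3p6:
  fixes n :: nat and i j :: int and Hi Hj :: "(nat \<Rightarrow> nat) set"
  assumes "n > 30" and "n mod 6 = 0"
    and "-1 \<le> i" and "i < j" and "j \<le> int (n div 3) - 1"
    and "Hi \<in> Hcal n i" and "Hj \<in> Hcal n j"
  shows "Pical n i \<inter> Hj = {} \<and> Pical n j \<inter> Hi = {}"
proof
  show "Pical n i \<inter> Hj = {}"
  proof (rule ccontr)
    assume "Pical n i \<inter> Hj \<noteq> {}"
    then obtain p where p: "p \<in> Pical n i" "p \<in> Hj" by blast
    have "p \<notin> Hj" by (rule key[OF assms(1,2) assms(3) _ _ assms(5) _ p(1) assms(7)]) (use assms in auto)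
    then show False using p by simp
  qed
  show "Pical n j \<inter> Hi = {}"
  proof (rule ccontr)
    assume "Pical n j \<inter> Hi \<noteq> {}"
    then obtain p where p: "p \<in> Pical n j" "p \<in> Hi" by blast
    have "p \<notin> Hi" by (rule key[OF assms(1,2) _ assms(5) assms(3) _ _ p(1) assms(6)]) (use assms in auto)
    then show False using p by simp
  qed
qed

end
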